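(* Consider the perturbed federated algorithm described in the context, with $\beta\in(0,1)$ and constant step size $\gamma_t=\gamma=[2LE]^{-1}$. Assume that the bounded variance, bounded stochastic gradient norm, $L$-smoothness and $\mu$-strong convexity assumptions of the context hold. Then for all $t\ge0$, $$\mathbb{E}\,F(\overline{\mathbf{w}}_{t,0})-f_\star\le\frac{L\Delta}{\mu}\Big[1-\frac{\mu}{(\beta+2)L}\Big]^t+\frac{S\sigma^2}{4\mu}+\frac{3L\Gamma}{2\mu}+\frac{2AE^2G^2}{\mu}+\frac{\beta(1-\beta)EG^2}{8L},$$ where $A=4+(1-\beta)^2+8(1-1/\beta)^2$, $\Delta=F(\overline{\mathbf{w}}_{0,0})-f_\star$ and $S=\sum_ip_i^2$.
   Context: Setting: there are $C$ clients with local objectives $F_i:\mathbb{R}^D\to\mathbb{R}$. Similarity weights $p_{in}\ge0$ are symmetric ($p_{in}=p_{ni}$), satisfy $p_{ii}=0$, and $\sum_{i,n}p_{in}=1$. Let $p_i=\sum_np_{in}>0$, so that $\sum_ip_i=1$. The global objective is $F=\sum_ip_iF_i$. Algorithm, with parameter $\beta$, $E\ge1$ local steps and step sizes $\gamma_t$, all clients participating: - $\mathbf{u}^i_0=\overline{\mathbf{w}}_{0,0}$ (the initial point). - In round $t$, each client sets $\mathbf{w}^i_{t,0}=\overline{\mathbf{w}}_{t,0}$. For $k=0,\dots,E-1$ it forms $\widetilde{\mathbf{w}}^i_{t,k}=\beta\mathbf{w}^i_{t,k}+(1-\beta)\mathbf{u}^i_t$ and updates $\mathbf{w}^i_{t,k+1}=\mathbf{w}^i_{t,k}-\gamma_tg_i(\widetilde{\mathbf{w}}^i_{t,k})$,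 where $g_i$ is a stochastic gradient of $F_i$, sampled independently across clients and steps given the past. - $\overline{\mathbf{w}}_{t,k}=\sum_ip_i\mathbf{w}^i_{t,k}$ and $\overline{\mathbf{w}}_{t+1,0}=\overline{\mathbf{w}}_{t,E}$. - For $t\ge1$, $\mathbf{u}^i_t=\frac1{p_i}\sum_np_{in}\mathbf{w}^n_{t-1,E}$. $\mathbb{E}$ denotes total expectation. Assumptions: - Bounded variance: $\mathbb{E}\,g_i(\widetilde{\mathbf{w}}^i_{t,k})=\nabla F_i(\widetilde{\mathbf{w}}^i_{t,k})$ and $\mathbb{E}\|g_i(\widetilde{\mathbf{w}}^i_{t,k})-\nabla F_i(\widetilde{\mathbf{w}}^i_{t,k})\|^2\le\sigma^2$. - Bounded stochastic gradient norm: $\mathbb{E}\|g_i(\widetilde{\mathbf{w}}^i_{t,k})\|^2\le G^2$ for all $i,t,k$. - $L$-smoothness: each $\nabla F_i$ is $L$-Lipschitz. - $\mu$-strong convexity: each $F_i$ is $\mu$-strongly convex. Notation: $\mathbf{w}_\star$ is the minimizer of $F$ and $f_\star=F(\mathbf{w}_\star)$. For each $i$, $\mathbf{w}_\star^i=\arg\min F_i$. The statistical heterogeneity is $\Gamma=f_\star-\sum_ip_iF_i(\mathbf{w}^i_\star)$. *)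

theory Defs
  imports "HOL-Analysis.Analysis" "HOL-Probability.Probability"
begin

definition pw :: "(nat \<Rightarrow> nat \<Rightarrow> real) \<Rightarrow> nat \<Rightarrow> nat \<Rightarrow> real" where
  "pw p C i = (\<Sum>n<C. p i n)"

definition Fglob :: "(nat \<Rightarrow> nat \<Rightarrow> real) \<Rightarrow> nat \<Rightarrow> (nat \<Rightarrow> 'v \<Rightarrow> real) \<Rightarrow> 'v \<Rightarrow> real" where
  "Fglob p C Fs x = (\<Sum>i<C. pw p C i * Fs i x)"

definition strongly_convex_grad :: "real \<Rightarrow> ('v::real_inner \<Rightarrow> real) \<Rightarrow> ('v \<Rightarrow> 'v) \<Rightarrow> bool" where
  "strongly_convex_grad \<mu> f gf \<longleftrightarrow>
     (\<forall>x y. f y \<ge> f x + inner (gf x) (y - x) + \<mu> / 2 * (norm (y - x))\<^sup>2)"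

definition cond_indep_vars ::
  "'a measure \<Rightarrow> 'a measure \<Rightarrow> 'b measure \<Rightarrow> ('i \<Rightarrow> 'a \<Rightarrow> 'b) \<Rightarrow> 'i set \<Rightarrow> bool" where
  "cond_indep_vars M F N X I \<longleftrightarrow>
     (\<forall>J. J \<subseteq> I \<longrightarrow> finite J \<longrightarrow> (\<forall>A. (\<forall>j\<in>J. A j \<in> sets N) \<longrightarrow>
        (AE \<omega> in M. real_cond_exp M F (\<lambda>\<omega>. \<Prod>j\<in>J. indicator (A j) (X j \<omega>)) \<omega>
                   = (\<Prod>j\<in>J. real_cond_exp M F (\<lambda>\<omega>. indicator (A j) (X j \<omega>)) \<omega>))))"

end

theory Submission
  imports Defs
begin

lemma jensen_sq:
  fixes q x :: "'i \<Rightarrow> real"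
  assumes "\<And>i. i \<in> I \<Longrightarrow> q i \<ge> 0"
  shows "(\<Sum>i\<in>I. q i * x i)\<^sup>2 \<le> (\<Sum>i\<in>I. q i) * (\<Sum>i\<in>I. q i * (x i)\<^sup>2)"
proof -
  have "(\<Sum>i\<in>I. q i * x i)\<^sup>2 = (\<Sum>i\<in>I. (sqrt (q i) * x i) * sqrt (q i))\<^sup>2"
    using assms by (intro arg_cong[where f="\<lambda>z. z\<^sup>2"] sum.cong) (auto simp: real_sqrt_mult_self mult_ac)
  also have "\<dots> \<le> (\<Sum>i\<in>I. (sqrt (q i) * x i)\<^sup>2) * (\<Sum>i\<in>I. (sqrt (q i))\<^sup>2)"
    by (rule Cauchy_Schwarz_ineq_sum)
  also have "\<dots> = (\<Sum>i\<in>I. q i) * (\<Sum>i\<in>I. q i * (x i)\<^sup>2)"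
    using assms by (simp add: power_mult_distrib mult.commute)
  finally show ?thesis .
qed

lemma norm_sum_sq:
  fixes q :: "'i \<Rightarrow> real" and v :: "'i \<Rightarrow> 'v::real_normed_vector"
  assumes "\<And>i. i \<in> I \<Longrightarrow> q i \<ge> 0"
  shows "(norm (\<Sum>i\<in>I. q i *\<^sub>R v i))\<^sup>2 \<le> (\<Sum>i\<in>I. q i) * (\<Sum>i\<in>I. q i * (norm (v i))\<^sup>2)"
proof -
  have "norm (\<Sum>i\<in>I. q i *\<^sub>R v i) \<le> (\<Sum>i\<in>I. q i * norm (v i))"
    using assms by (intro order_trans[OF norm_sum] sum_mono) auto
  hence "(norm (\<Sum>i\<in>I. q i *\<^sub>R v i))\<^sup>2 \<le> (\<Sum>i\<in>I. q i * norm (v i))\<^sup>2"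
    by (intro power_mono) auto
  also have "\<dots> \<le> (\<Sum>i\<in>I. q i) * (\<Sum>i\<in>I. q i * (norm (v i))\<^sup>2)" by (rule jensen_sq[OF assms])
  finally show ?thesis .
qed

lemma norm_sum_sq1:
  fixes v :: "'i \<Rightarrow> 'v::real_normed_vector"
  shows "(norm (\<Sum>i\<in>I. v i))\<^sup>2 \<le> real (card I) * (\<Sum>i\<in>I. (norm (v i))\<^sup>2)"
  using norm_sum_sq[of I "\<lambda>_. 1" v] by simp

lemma sq_tri: "(a::real) \<le> b + c \<Longrightarrow> 0 \<le> a \<Longrightarrow> a\<^sup>2 \<le> 2 * b\<^sup>2 + 2 * c\<^sup>2"
proof -
  assume h: "a \<le> b + c" "0 \<le> a"
  have "a\<^sup>2 \<le> (b + c)\<^sup>2" using h by (intro power_mono) auto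
  moreover have "(b + c)\<^sup>2 = 2 * b\<^sup>2 + 2 * c\<^sup>2 - (b - c)\<^sup>2" by (simp add: power2_eq_square algebra_simps)
  moreover have "0 \<le> (b - c)\<^sup>2" by simp
  ultimately show ?thesis by linarith
qed

lemma prod_le_sq: "0 \<le> (x::real) \<Longrightarrow> 0 \<le> y \<Longrightarrow> x * y \<le> x\<^sup>2 + y\<^sup>2"
proof -
  assume h: "0 \<le> x" "0 \<le> y"
  have "x\<^sup>2 + y\<^sup>2 - x * y = (x - y)\<^sup>2 + x * y" by (simp add: power2_eq_square algebra_simps)
  moreover have "0 \<le> (x - y)\<^sup>2" "0 \<le> x * y" using h by auto
  ultimately show ?thesis by linarith
qed

lemma lip_sq:
  fixes f :: "'v::real_normed_vector \<Rightarrow> 'w::real_normed_vector"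
  assumes "L-lipschitz_on UNIV f"
  shows "(norm (f x))\<^sup>2 \<le> 2 * (norm (f y))\<^sup>2 + 2 * L\<^sup>2 * (norm (x - y))\<^sup>2"
proof -
  have "norm (f x - f y) \<le> L * norm (x - y)"
    using lipschitz_onD[OF assms, of x y] by (simp add: dist_norm)
  hence "norm (f x) \<le> norm (f y) + L * norm (x - y)"
    using norm_triangle_sub[of "f x" "f y"] by linarith
  hence "(norm (f x))\<^sup>2 \<le> 2 * (norm (f y))\<^sup>2 + 2 * (L * norm (x - y))\<^sup>2"
    by (intro sq_tri) auto
  thus ?thesis by (simp add: power_mult_distrib)
qed

lemma affine_sum:
  fixes q :: "'i \<Rightarrow> real" and v :: "'i \<Rightarrow> 'v::real_vector"
  assumes "(\<Sum>i\<in>I. q i) = 1"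
  shows "(\<Sum>i\<in>I. q i *\<^sub>R v i) - z = (\<Sum>i\<in>I. q i *\<^sub>R (v i - z))"
proof -
  have "(\<Sum>i\<in>I. q i *\<^sub>R (v i - z)) = (\<Sum>i\<in>I. q i *\<^sub>R v i) - (\<Sum>i\<in>I. q i) *\<^sub>R z"
    by (simp add: scaleR_diff_right sum_subtractf scaleR_sum_left)
  thus ?thesis using assms by simp
qed

lemma PL_sum:
  fixes F :: "'i \<Rightarrow> 'v::real_inner \<Rightarrow> real" and gF :: "'i \<Rightarrow> 'v \<Rightarrow> 'v"
  assumes sc: "\<And>i. i \<in> I \<Longrightarrow> strongly_convex_grad \<mu> (F i) (gF i)"
    and q0: "\<And>i. i \<in> I \<Longrightarrow> q i \<ge> 0" and q1: "(\<Sum>i\<in>I. q i) = 1" and mu: "\<mu> > 0"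
  shows "(\<Sum>i\<in>I. q i * F i x) - (\<Sum>i\<in>I. q i * F i y) \<le> (norm (\<Sum>i\<in>I. q i *\<^sub>R gF i x))\<^sup>2 / (2 * \<mu>)"
proof -
  define a where "a = (\<Sum>i\<in>I. q i *\<^sub>R gF i x)"
  define d where "d = y - x"
  have "(\<Sum>i\<in>I. q i * F i y) \<ge> (\<Sum>i\<in>I. q i * (F i x + inner (gF i x) d + \<mu> / 2 * (norm d)\<^sup>2))"
    using sc q0 unfolding strongly_convex_grad_def d_def by (intro sum_mono mult_left_mono) auto
  also have "(\<Sum>i\<in>I. q i * (F i x + inner (gF i x) d + \<mu> / 2 * (norm d)\<^sup>2))
     = (\<Sum>i\<in>I. q i * F i x) + inner a d + (\<Sum>i\<in>I. q i) * (\<mu> / 2 * (norm d)\<^sup>2)"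
  proof -
    have "(\<Sum>i\<in>I. q i * (F i x + inner (gF i x) d + \<mu> / 2 * (norm d)\<^sup>2))
       = (\<Sum>i\<in>I. q i * F i x) + (\<Sum>i\<in>I. q i * inner (gF i x) d) + (\<Sum>i\<in>I. q i * (\<mu> / 2 * (norm d)\<^sup>2))"
      by (simp add: distrib_left sum.distrib)
    also have "(\<Sum>i\<in>I. q i * inner (gF i x) d) = inner a d"
      by (simp add: a_def inner_sum_left)
    also have "(\<Sum>i\<in>I. q i * (\<mu> / 2 * (norm d)\<^sup>2)) = (\<Sum>i\<in>I. q i) * (\<mu> / 2 * (norm d)\<^sup>2)"
      by (rule sum_distrib_right[symmetric])
    finally show ?thesis .
  qed
  finally have 1: "(\<Sum>i\<in>I. q i * F i y) \<ge> (\<Sum>i\<in>I. q i * F i x) + inner a d + \<mu> / 2 * (norm d)\<^sup>2"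
    using q1 by simp
  have "0 \<le> (norm (a + \<mu> *\<^sub>R d))\<^sup>2" by simp
  also have "\<dots> = (norm a)\<^sup>2 + 2 * \<mu> * inner a d + \<mu>\<^sup>2 * (norm d)\<^sup>2"
    by (simp only: power2_norm_eq_inner) (simp add: inner_add_left inner_add_right inner_commute algebra_simps power2_eq_square)
  finally have "inner a d + \<mu> / 2 * (norm d)\<^sup>2 \<ge> - (norm a)\<^sup>2 / (2 * \<mu>)"
    using mu by (simp add: field_simps power2_eq_square)
  with 1 show ?thesis unfolding a_def[symmetric] by (simp add: field_simps)
qed

lemma cond_sq_bound:
  fixes gg m :: "'s \<Rightarrow> 'u::euclidean_space"
  assumes sub: "sigma_finite_subalgebra M F"
    and ggM[measurable]: "gg \<in> borel_measurable M" and mF: "m \<in> borel_measurable F"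
    and ivar: "integrable M (\<lambda>\<omega>. (norm (gg \<omega> - m \<omega>))\<^sup>2)"
    and ig: "integrable M (\<lambda>\<omega>. (norm (gg \<omega>))\<^sup>2)"
    and ub: "\<And>b. b \<in> Basis \<Longrightarrow> AE \<omega> in M. real_cond_exp M F (\<lambda>\<omega>. inner (gg \<omega>) b) \<omega> = inner (m \<omega>) b"
  shows "integrable M (\<lambda>\<omega>. (norm (m \<omega>))\<^sup>2) \<and> (\<integral>\<omega>. (norm (m \<omega>))\<^sup>2 \<partial>M) \<le> (\<integral>\<omega>. (norm (gg \<omega>))\<^sup>2 \<partial>M)"
proof -
  interpret S: sigma_finite_subalgebra M F by (rule sub)
  have mM[measurable]: "m \<in> borel_measurable M" by (rule measurable_from_subalg[OF S.subalg mF])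
  have im: "integrable M (\<lambda>\<omega>. (norm (m \<omega>))\<^sup>2)"
  proof (rule Bochner_Integration.integrable_bound[where f="\<lambda>\<omega>. 2 * (norm (gg \<omega>))\<^sup>2 + 2 * (norm (gg \<omega> - m \<omega>))\<^sup>2"])
    show "integrable M (\<lambda>\<omega>. 2 * (norm (gg \<omega>))\<^sup>2 + 2 * (norm (gg \<omega> - m \<omega>))\<^sup>2)"
      using ig ivar by auto
    show "(\<lambda>\<omega>. (norm (m \<omega>))\<^sup>2) \<in> borel_measurable M" by measurable
    show "AE \<omega> in M. norm ((norm (m \<omega>))\<^sup>2) \<le> norm (2 * (norm (gg \<omega>))\<^sup>2 + 2 * (norm (gg \<omega> - m \<omega>))\<^sup>2)"
    proof (intro AE_I2)
      fix \<omega>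
      have "norm (m \<omega>) \<le> norm (gg \<omega>) + norm (gg \<omega> - m \<omega>)"
        by (metis add.commute diff_add_cancel norm_triangle_ineq norm_minus_commute)
      hence "(norm (m \<omega>))\<^sup>2 \<le> 2 * (norm (gg \<omega>))\<^sup>2 + 2 * (norm (gg \<omega> - m \<omega>))\<^sup>2"
        by (intro sq_tri) auto
      thus "norm ((norm (m \<omega>))\<^sup>2) \<le> norm (2 * (norm (gg \<omega>))\<^sup>2 + 2 * (norm (gg \<omega> - m \<omega>))\<^sup>2)"
        by simp
    qed
  qed
  have ib: "integrable M (\<lambda>\<omega>. inner (m \<omega>) b * inner (gg \<omega>) b)" if b: "b \<in> Basis" for b
  proof (rule Bochner_Integration.integrable_bound[where f="\<lambda>\<omega>. (norm (m \<omega>))\<^sup>2 + (norm (gg \<omega>))\<^sup>2"])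
    show "integrable M (\<lambda>\<omega>. (norm (m \<omega>))\<^sup>2 + (norm (gg \<omega>))\<^sup>2)" using im ig by auto
    show "(\<lambda>\<omega>. inner (m \<omega>) b * inner (gg \<omega>) b) \<in> borel_measurable M" by measurable
    show "AE \<omega> in M. norm (inner (m \<omega>) b * inner (gg \<omega>) b) \<le> norm ((norm (m \<omega>))\<^sup>2 + (norm (gg \<omega>))\<^sup>2)"
    proof (intro AE_I2)
      fix \<omega>
      have 1: "\<bar>inner (m \<omega>) b\<bar> \<le> norm (m \<omega>)" "\<bar>inner (gg \<omega>) b\<bar> \<le> norm (gg \<omega>)"
        using Basis_le_norm b by auto
      have "\<bar>inner (m \<omega>) b * inner (gg \<omega>) b\<bar> \<le> norm (m \<omega>) * norm (gg \<omega>)"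
        unfolding abs_mult using 1 by (intro mult_mono) auto
      also have "\<dots> \<le> (norm (m \<omega>))\<^sup>2 + (norm (gg \<omega>))\<^sup>2"
        by (rule prod_le_sq) auto
      finally show "norm (inner (m \<omega>) b * inner (gg \<omega>) b) \<le> norm ((norm (m \<omega>))\<^sup>2 + (norm (gg \<omega>))\<^sup>2)"
        by simp
    qed
  qed
  have ib2: "integrable M (\<lambda>\<omega>. inner (m \<omega>) b * inner (m \<omega>) b)" if b: "b \<in> Basis" for b
  proof (rule Bochner_Integration.integrable_bound[where f="\<lambda>\<omega>. (norm (m \<omega>))\<^sup>2"])
    show "integrable M (\<lambda>\<omega>. (norm (m \<omega>))\<^sup>2)" using im by auto
    show "(\<lambda>\<omega>. inner (m \<omega>) b * inner (m \<omega>) b) \<in> borel_measurable M" by measurable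
    show "AE \<omega> in M. norm (inner (m \<omega>) b * inner (m \<omega>) b) \<le> norm ((norm (m \<omega>))\<^sup>2)"
    proof (intro AE_I2)
      fix \<omega>
      have 1: "\<bar>inner (m \<omega>) b\<bar> \<le> norm (m \<omega>)"
        using Basis_le_norm b by auto
      have "\<bar>inner (m \<omega>) b * inner (m \<omega>) b\<bar> \<le> norm (m \<omega>) * norm (m \<omega>)"
        unfolding abs_mult using 1 by (intro mult_mono) auto
      thus "norm (inner (m \<omega>) b * inner (m \<omega>) b) \<le> norm ((norm (m \<omega>))\<^sup>2)"
        by (simp add: power2_eq_square)
    qed
  qed
  have eqb: "(\<integral>\<omega>. inner (m \<omega>) b * inner (gg \<omega>) b \<partial>M) = (\<integral>\<omega>. inner (m \<omega>) b * inner (m \<omega>) b \<partial>M)"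
    if b: "b \<in> Basis" for b
  proof -
    have mbF[measurable]: "(\<lambda>\<omega>. inner (m \<omega>) b) \<in> borel_measurable F" using mF by measurable
    have ceM: "real_cond_exp M F (\<lambda>\<omega>. inner (gg \<omega>) b) \<in> borel_measurable M"
      by (rule measurable_from_subalg[OF S.subalg]) simp
    have "(\<integral>\<omega>. inner (m \<omega>) b * inner (gg \<omega>) b \<partial>M)
       = (\<integral>\<omega>. inner (m \<omega>) b * real_cond_exp M F (\<lambda>\<omega>. inner (gg \<omega>) b) \<omega> \<partial>M)"
      by (rule S.real_cond_exp_intg(2)[symmetric]) (use ib[OF b] in auto)
    also have "\<dots> = (\<integral>\<omega>. inner (m \<omega>) b * inner (m \<omega>) b \<partial>M)"
      using ub[OF b] ceM by (intro integral_cong_AE) auto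
    finally show ?thesis .
  qed
  have pt: "inner (m \<omega>) (gg \<omega>) = (\<Sum>b\<in>Basis. inner (m \<omega>) b * inner (gg \<omega>) b)" for \<omega>
    by (rule euclidean_inner)
  have pt2: "(norm (m \<omega>))\<^sup>2 = (\<Sum>b\<in>Basis. inner (m \<omega>) b * inner (m \<omega>) b)" for \<omega>
    by (simp add: power2_norm_eq_inner euclidean_inner[of "m \<omega>" "m \<omega>"])
  have iin: "integrable M (\<lambda>\<omega>. inner (m \<omega>) (gg \<omega>))"
    unfolding pt using ib by (intro Bochner_Integration.integrable_sum) auto
  have "(\<integral>\<omega>. inner (m \<omega>) (gg \<omega>) \<partial>M) = (\<Sum>b\<in>Basis. \<integral>\<omega>. inner (m \<omega>) b * inner (gg \<omega>) b \<partial>M)"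
    unfolding pt using ib by (intro Bochner_Integration.integral_sum) auto
  also have "\<dots> = (\<Sum>b\<in>Basis. \<integral>\<omega>. inner (m \<omega>) b * inner (m \<omega>) b \<partial>M)"
    using eqb by simp
  also have "\<dots> = (\<integral>\<omega>. (norm (m \<omega>))\<^sup>2 \<partial>M)"
    unfolding pt2 using ib2 by (intro Bochner_Integration.integral_sum[symmetric]) auto
  finally have inn: "(\<integral>\<omega>. inner (m \<omega>) (gg \<omega>) \<partial>M) = (\<integral>\<omega>. (norm (m \<omega>))\<^sup>2 \<partial>M)" .
  have pt3: "(norm (gg \<omega> - m \<omega>))\<^sup>2 = (norm (gg \<omega>))\<^sup>2 - 2 * inner (m \<omega>) (gg \<omega>) + (norm (m \<omega>))\<^sup>2" for \<omega>
    by (simp add: power2_norm_eq_inner inner_diff_left inner_diff_right inner_commute)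
  have "0 \<le> (\<integral>\<omega>. (norm (gg \<omega> - m \<omega>))\<^sup>2 \<partial>M)" by (intro integral_nonneg_AE) auto
  also have "(\<integral>\<omega>. (norm (gg \<omega> - m \<omega>))\<^sup>2 \<partial>M)
     = (\<integral>\<omega>. (norm (gg \<omega>))\<^sup>2 \<partial>M) - 2 * (\<integral>\<omega>. inner (m \<omega>) (gg \<omega>) \<partial>M) + (\<integral>\<omega>. (norm (m \<omega>))\<^sup>2 \<partial>M)"
    unfolding pt3 using ig iin im by (simp add: integral_add integral_diff)
  finally show ?thesis using im inn by simp
qed

lemma meas_eq: "f \<in> measurable M N \<Longrightarrow> (\<And>x. x \<in> space M \<Longrightarrow> g x = f x) \<Longrightarrow> g \<in> measurable M N"
  using measurable_cong[of M g f N] by simp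

theorem theorem3:
  fixes M :: "'a measure" and Filt :: "nat \<Rightarrow> 'a measure"
    and C E :: nat and p :: "nat \<Rightarrow> nat \<Rightarrow> real"
    and Fs :: "nat \<Rightarrow> 'v::euclidean_space \<Rightarrow> real" and gF :: "nat \<Rightarrow> 'v \<Rightarrow> 'v"
    and L \<mu> \<sigma> G \<beta> \<gamma> :: real
    and w0 wstar :: 'v and ws :: "nat \<Rightarrow> 'v"
    and w g :: "nat \<Rightarrow> nat \<Rightarrow> nat \<Rightarrow> 'a \<Rightarrow> 'v" and u :: "nat \<Rightarrow> nat \<Rightarrow> 'a \<Rightarrow> 'v"
    and t :: nat
  defines "wbar \<equiv> \<lambda>tt k \<omega>. \<Sum>i<C. pw p C i *\<^sub>R w i tt k \<omega>"
    and "wtil \<equiv> \<lambda>i tt k \<omega>. \<beta> *\<^sub>R w i tt k \<omega> + (1 - \<beta>) *\<^sub>R u i tt \<omega>"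
  assumes
    \<comment> \<open>similarity weights\<close>
    p_nonneg: "\<And>i n. i < C \<Longrightarrow> n < C \<Longrightarrow> p i n \<ge> 0"
    and p_sym: "\<And>i n. i < C \<Longrightarrow> n < C \<Longrightarrow> p i n = p n i"
    and p_diag: "\<And>i. i < C \<Longrightarrow> p i i = 0"
    and p_sum: "(\<Sum>i<C. \<Sum>n<C. p i n) = 1"
    and p_pos: "\<And>i. i < C \<Longrightarrow> pw p C i > 0"
    \<comment> \<open>parameters\<close>
    and E_pos: "E \<ge> 1"
    and beta: "0 < \<beta>" "\<beta> < 1"
    and L_pos: "L > 0" and mu_pos: "\<mu> > 0"
    and step: "\<gamma> = 1 / (2 * L * real E)"
    \<comment> \<open>smoothness and strong convexity\<close>
    and grad: "\<And>i x. i < C \<Longrightarrow> GDERIV (Fs i) x :> gF i x"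
    and smooth: "\<And>i. i < C \<Longrightarrow> L-lipschitz_on UNIV (gF i)"
    and sconv: "\<And>i. i < C \<Longrightarrow> strongly_convex_grad \<mu> (Fs i) (gF i)"
    \<comment> \<open>minimizers\<close>
    and wstar_min: "\<And>x. Fglob p C Fs wstar \<le> Fglob p C Fs x"
    and ws_min: "\<And>i x. i < C \<Longrightarrow> Fs i (ws i) \<le> Fs i x"
    \<comment> \<open>algorithm (pointwise in the sample \<omega>)\<close>
    and u_init: "\<And>i \<omega>. i < C \<Longrightarrow> \<omega> \<in> space M \<Longrightarrow> u i 0 \<omega> = w0"
    and u_next: "\<And>i tt \<omega>. i < C \<Longrightarrow> \<omega> \<in> space M \<Longrightarrow>
        u i (Suc tt) \<omega> = (1 / pw p C i) *\<^sub>R (\<Sum>n<C. p i n *\<^sub>R w n tt E \<omega>)"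
    and w_init: "\<And>i \<omega>. i < C \<Longrightarrow> \<omega> \<in> space M \<Longrightarrow> w i 0 0 \<omega> = w0"
    and w_round: "\<And>i tt \<omega>. i < C \<Longrightarrow> \<omega> \<in> space M \<Longrightarrow> w i (Suc tt) 0 \<omega> = wbar tt E \<omega>"
    and w_step: "\<And>i tt k \<omega>. i < C \<Longrightarrow> k < E \<Longrightarrow> \<omega> \<in> space M \<Longrightarrow>
        w i tt (Suc k) \<omega> = w i tt k \<omega> - \<gamma> *\<^sub>R g i tt k \<omega>"
    \<comment> \<open>probability space and filtration of the past (global step index tt*E+k)\<close>
    and prob: "prob_space M"
    and filt_sub: "\<And>s. sigma_finite_subalgebra M (Filt s)"
    and filt_mono: "\<And>s. sets (Filt s) \<subseteq> sets (Filt (Suc s))"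
    and g_adapted: "\<And>i tt k. i < C \<Longrightarrow> k < E \<Longrightarrow>
        g i tt k \<in> borel_measurable (Filt (Suc (tt * E + k)))"
    \<comment> \<open>unbiasedness given the past\<close>
    and unbiased: "\<And>i tt k b. i < C \<Longrightarrow> k < E \<Longrightarrow> b \<in> Basis \<Longrightarrow>
        AE \<omega> in M. real_cond_exp M (Filt (tt * E + k)) (\<lambda>\<omega>. inner (g i tt k \<omega>) b) \<omega>
                  = inner (gF i (wtil i tt k \<omega>)) b"
    \<comment> \<open>independence across clients given the past\<close>
    and indep: "\<And>tt k. k < E \<Longrightarrow>
        cond_indep_vars M (Filt (tt * E + k)) borel (\<lambda>i. g i tt k) {..<C}"
    \<comment> \<open>bounded variance and bounded stochastic gradient norm\<close>
    and var_int: "\<And>i tt k. i < C \<Longrightarrow> k < E \<Longrightarrow>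
        integrable M (\<lambda>\<omega>. (norm (g i tt k \<omega> - gF i (wtil i tt k \<omega>)))\<^sup>2)"
    and var_bound: "\<And>i tt k. i < C \<Longrightarrow> k < E \<Longrightarrow>
        (\<integral>\<omega>. (norm (g i tt k \<omega> - gF i (wtil i tt k \<omega>)))\<^sup>2 \<partial>M) \<le> \<sigma>\<^sup>2"
    and norm_int: "\<And>i tt k. i < C \<Longrightarrow> k < E \<Longrightarrow>
        integrable M (\<lambda>\<omega>. (norm (g i tt k \<omega>))\<^sup>2)"
    and norm_bound: "\<And>i tt k. i < C \<Longrightarrow> k < E \<Longrightarrow>
        (\<integral>\<omega>. (norm (g i tt k \<omega>))\<^sup>2 \<partial>M) \<le> G\<^sup>2"
  shows "integrable M (\<lambda>\<omega>. Fglob p C Fs (wbar t 0 \<omega>)) \<and>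
    (\<integral>\<omega>. Fglob p C Fs (wbar t 0 \<omega>) \<partial>M) - Fglob p C Fs wstar
      \<le> L * (Fglob p C Fs w0 - Fglob p C Fs wstar) / \<mu> * (1 - \<mu> / ((\<beta> + 2) * L)) ^ t
        + (\<Sum>i<C. (pw p C i)\<^sup>2) * \<sigma>\<^sup>2 / (4 * \<mu>)
        + 3 * L * (Fglob p C Fs wstar - (\<Sum>i<C. pw p C i * Fs i (ws i))) / (2 * \<mu>)
        + 2 * (4 + (1 - \<beta>)\<^sup>2 + 8 * (1 - 1 / \<beta>)\<^sup>2) * (real E)\<^sup>2 * G\<^sup>2 / \<mu>
        + \<beta> * (1 - \<beta>) * real E * G\<^sup>2 / (8 * L)"
proof -
  interpret PS: prob_space M by (rule prob)
  define P where "P = pw p C"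
  have P_eq: "P i = (\<Sum>n<C. p i n)" for i by (simp add: P_def pw_def)
  have P0: "P i > 0" if "i < C" for i using p_pos[OF that] by (simp add: P_def)
  have P0': "P i \<ge> 0" if "i < C" for i using P0[OF that] by simp
  have Psum: "(\<Sum>i<C. P i) = 1" using p_sum by (simp add: P_eq)
  have C0: "0 < C" using Psum by (cases C) auto
  have Fg: "Fglob p C Fs x = (\<Sum>i<C. P i * Fs i x)" for x by (simp add: Fglob_def P_def)
  have wbar_eq: "wbar tt k \<omega> = (\<Sum>i<C. P i *\<^sub>R w i tt k \<omega>)" for tt k \<omega> by (simp add: wbar_def P_def)
  have wtil_eq: "wtil i tt k \<omega> = \<beta> *\<^sub>R w i tt k \<omega> + (1 - \<beta>) *\<^sub>R u i tt \<omega>" for i tt k \<omega>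
    by (simp add: wtil_def)
  define q where "q i n = p i n / P i" for i n
  have q0: "q i n \<ge> 0" if "i < C" "n < C" for i n
    using p_nonneg[OF that] P0[OF that(1)] by (simp add: q_def)
  have qsum: "(\<Sum>n<C. q i n) = 1" if "i < C" for i
    using P0[OF that] by (simp add: q_def sum_divide_distrib[symmetric] P_eq[symmetric])
  have E1: "real E \<ge> 1" using E_pos by simp
  have E0: "0 < E" using E_pos by simp
  have gam0: "\<gamma> > 0" using L_pos E1 by (simp add: step)
  have gamE: "\<gamma>\<^sup>2 * (real E)\<^sup>2 = 1 / (4 * L\<^sup>2)"
    using L_pos E1 by (simp add: step power2_eq_square field_simps)

  have subF: "subalgebra M (Filt s)" for s using sigma_finite_subalgebra.subalg[OF filt_sub] .
  have spF: "space (Filt s) = space M" for s using subF[of s] by (simp add: subalgebra_def)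
  have setsle: "sets (Filt a) \<subseteq> sets (Filt b)" if "a \<le> b" for a b
    using lift_Suc_mono_le[of "\<lambda>s. sets (Filt s)", OF filt_mono that] .
  have liftv: "f \<in> borel_measurable (Filt b)"
    if "a \<le> b" "f \<in> borel_measurable (Filt a)" for a b and f :: "'a \<Rightarrow> 'v"
  proof -
    have "subalgebra (Filt b) (Filt a)" using spF setsle[OF that(1)] by (simp add: subalgebra_def)
    thus ?thesis using measurable_from_subalg[OF _ that(2)] by simp
  qed
  have toMv: "f \<in> borel_measurable M" if "f \<in> borel_measurable (Filt a)" for a and f :: "'a \<Rightarrow> 'v"
    using measurable_from_subalg[OF subF that] .
  have gFilt: "g i s k \<in> borel_measurable (Filt b)" if "i < C" "k < E" "Suc (s * E + k) \<le> b" for i s k b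
    using liftv[OF that(3) g_adapted[OF that(1,2)]] .
  have gM: "g i s k \<in> borel_measurable M" if "i < C" "k < E" for i s k
    using toMv[OF g_adapted[OF that]] .
  have wstep_meas: "w i s k \<in> borel_measurable (Filt (s * E + k))"
    if h0: "\<And>i. i < C \<Longrightarrow> w i s 0 \<in> borel_measurable (Filt (s * E))" and iC: "i < C" and kE: "k \<le> E"
    for i s k
    using kE
  proof (induction k)
    case 0 thus ?case using h0[OF iC] by simp
  next
    case (Suc k)
    hence kE: "k < E" by simp
    have a: "w i s k \<in> borel_measurable (Filt (s * E + Suc k))"
      by (rule liftv[of "s*E+k" "s*E+Suc k"]) (use Suc.IH kE in auto)
    have b: "g i s k \<in> borel_measurable (Filt (s * E + Suc k))"
      by (rule gFilt[OF iC kE]) simp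
    have "(\<lambda>\<omega>. w i s k \<omega> - \<gamma> *\<^sub>R g i s k \<omega>) \<in> borel_measurable (Filt (s * E + Suc k))"
      by (rule borel_measurable_diff[OF a borel_measurable_scaleR[OF borel_measurable_const b]])
    moreover have "w i s (Suc k) \<omega> = w i s k \<omega> - \<gamma> *\<^sub>R g i s k \<omega>"
      if "\<omega> \<in> space (Filt (s * E + Suc k))" for \<omega>
    proof -
      have "\<omega> \<in> space M" using that spF by simp
      thus ?thesis by (rule w_step[OF iC kE])
    qed
    ultimately show ?case by (rule meas_eq)
  qed
  have wmeas: "\<forall>i<C. \<forall>k\<le>E. w i s k \<in> borel_measurable (Filt (s * E + k))" for s
  proof (induction s)
    case 0
    have h: "w i 0 0 \<in> borel_measurable (Filt (0 * E))" if "i < C" for i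
      by (rule meas_eq[OF borel_measurable_const[of w0]]) (use w_init[OF that] spF in auto)
    show ?case using wstep_meas[OF h] by auto
  next
    case (Suc s)
    have h: "w i (Suc s) 0 \<in> borel_measurable (Filt (Suc s * E))" if iC: "i < C" for i
    proof -
      have "(\<lambda>\<omega>. \<Sum>n<C. P n *\<^sub>R w n s E \<omega>) \<in> borel_measurable (Filt (Suc s * E))"
      proof (rule borel_measurable_sum)
        fix n assume "n \<in> {..<C}"
        hence [measurable]: "w n s E \<in> borel_measurable (Filt (Suc s * E))"
          using Suc.IH by (simp add: add.commute)
        show "(\<lambda>\<omega>. P n *\<^sub>R w n s E \<omega>) \<in> borel_measurable (Filt (Suc s * E))" by measurable
      qed
      moreover have "w i (Suc s) 0 \<omega> = (\<Sum>n<C. P n *\<^sub>R w n s E \<omega>)" if "\<omega> \<in> space (Filt (Suc s * E))" for \<omega>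
        using w_round[OF iC] that spF by (simp add: wbar_eq)
      ultimately show ?thesis by (rule meas_eq)
    qed
    show ?case using wstep_meas[OF h] by auto
  qed
  have w0meas: "w i s 0 \<in> borel_measurable (Filt (s * E))" if "i < C" for i s
  proof -
    have "w i s 0 \<in> borel_measurable (Filt (s * E + 0))" using wmeas[of s] that by blast
    thus ?thesis by simp
  qed
  have umeas: "u i s \<in> borel_measurable (Filt (s * E))" if iC: "i < C" for i s
  proof (cases s)
    case 0
    show ?thesis unfolding 0
      by (rule meas_eq[OF borel_measurable_const[of w0]]) (use u_init[OF iC] spF in auto)
  next
    case (Suc r)
    have "(\<lambda>\<omega>. (1 / P i) *\<^sub>R (\<Sum>n<C. p i n *\<^sub>R w n r E \<omega>)) \<in> borel_measurable (Filt (s * E))"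
    proof -
      have "(\<lambda>\<omega>. \<Sum>n<C. p i n *\<^sub>R w n r E \<omega>) \<in> borel_measurable (Filt (s * E))"
      proof (rule borel_measurable_sum)
        fix n assume "n \<in> {..<C}"
        hence [measurable]: "w n r E \<in> borel_measurable (Filt (s * E))"
          using wmeas[of r] Suc by (simp add: add.commute)
        show "(\<lambda>\<omega>. p i n *\<^sub>R w n r E \<omega>) \<in> borel_measurable (Filt (s * E))" by measurable
      qed
      thus ?thesis by measurable
    qed
    moreover have "u i s \<omega> = (1 / P i) *\<^sub>R (\<Sum>n<C. p i n *\<^sub>R w n r E \<omega>)" if "\<omega> \<in> space (Filt (s * E))" for \<omega>
      using u_next[OF iC] that spF Suc by (simp add: P_def)
    ultimately show ?thesis by (rule meas_eq)
  qed
  have gFb: "gF i \<in> borel_measurable borel" if "i < C" for i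
    by (rule borel_measurable_continuous_onI[OF lipschitz_on_continuous_on[OF smooth[OF that]]])
  have mF: "(\<lambda>\<omega>. gF i (wtil i s 0 \<omega>)) \<in> borel_measurable (Filt (s * E))" if iC: "i < C" for i s
  proof -
    note [measurable] = w0meas[OF iC, of s] umeas[OF iC, of s] gFb[OF iC]
    have "(\<lambda>\<omega>. gF i (\<beta> *\<^sub>R w i s 0 \<omega> + (1 - \<beta>) *\<^sub>R u i s \<omega>)) \<in> borel_measurable (Filt (s * E))"
      by measurable
    thus ?thesis by (simp add: wtil_eq)
  qed

  \<comment> \<open>key estimate via unbiasedness\<close>
  have key: "integrable M (\<lambda>\<omega>. (norm (gF i (wtil i s 0 \<omega>)))\<^sup>2) \<and>
      (\<integral>\<omega>. (norm (gF i (wtil i s 0 \<omega>)))\<^sup>2 \<partial>M) \<le> G\<^sup>2" if iC: "i < C" for i s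
  proof -
    have ub: "\<And>b. b \<in> Basis \<Longrightarrow> AE \<omega> in M. real_cond_exp M (Filt (s * E)) (\<lambda>\<omega>. inner (g i s 0 \<omega>) b) \<omega>
        = inner (gF i (wtil i s 0 \<omega>)) b"
      using unbiased[OF iC E0, where tt=s] by simp
    have "integrable M (\<lambda>\<omega>. (norm (gF i (wtil i s 0 \<omega>)))\<^sup>2) \<and>
      (\<integral>\<omega>. (norm (gF i (wtil i s 0 \<omega>)))\<^sup>2 \<partial>M) \<le> (\<integral>\<omega>. (norm (g i s 0 \<omega>))\<^sup>2 \<partial>M)"
      by (rule cond_sq_bound[OF filt_sub gM[OF iC E0] mF[OF iC] var_int[OF iC E0] norm_int[OF iC E0] ub])
    thus ?thesis using norm_bound[OF iC E0, of s] by linarith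
  qed

  have PLpt: "Fglob p C Fs x - Fglob p C Fs wstar
      \<le> (1 / \<mu>) * (\<Sum>i<C. P i * ((norm (gF i (y i)))\<^sup>2 + L\<^sup>2 * (norm (x - y i))\<^sup>2))"
    for x and y :: "nat \<Rightarrow> 'v"
  proof -
    define N where "N = (norm (\<Sum>i<C. P i *\<^sub>R gF i x))\<^sup>2"
    define S2 where "S2 = (\<Sum>i<C. P i * ((norm (gF i (y i)))\<^sup>2 + L\<^sup>2 * (norm (x - y i))\<^sup>2))"
    have A: "Fglob p C Fs x - Fglob p C Fs wstar \<le> N / (2 * \<mu>)"
      unfolding Fg N_def by (rule PL_sum[OF _ _ Psum mu_pos]) (use sconv P0' in auto)
    have B: "N \<le> (\<Sum>i<C. P i) * (\<Sum>i<C. P i * (norm (gF i x))\<^sup>2)"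
      unfolding N_def by (rule norm_sum_sq) (use P0' in auto)
    have Cc: "(\<Sum>i<C. P i * (norm (gF i x))\<^sup>2) \<le> (\<Sum>i<C. P i * (2 * ((norm (gF i (y i)))\<^sup>2 + L\<^sup>2 * (norm (x - y i))\<^sup>2)))"
    proof (rule sum_mono)
      fix i assume "i \<in> {..<C}"
      hence iC: "i < C" by simp
      have "(norm (gF i x))\<^sup>2 \<le> 2 * (norm (gF i (y i)))\<^sup>2 + 2 * L\<^sup>2 * (norm (x - y i))\<^sup>2"
        by (rule lip_sq[OF smooth[OF iC]])
      thus "P i * (norm (gF i x))\<^sup>2 \<le> P i * (2 * ((norm (gF i (y i)))\<^sup>2 + L\<^sup>2 * (norm (x - y i))\<^sup>2))"
        using P0'[OF iC] by (intro mult_left_mono) (auto simp: algebra_simps)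
    qed
    have "(\<Sum>i<C. P i * (2 * ((norm (gF i (y i)))\<^sup>2 + L\<^sup>2 * (norm (x - y i))\<^sup>2))) = 2 * S2"
      by (simp add: S2_def sum_distrib_left mult_ac)
    with B Cc Psum have "N \<le> 2 * S2" by simp
    hence "N / (2 * \<mu>) \<le> 2 * S2 / (2 * \<mu>)" using mu_pos by (intro divide_right_mono) auto
    also have "\<dots> = (1 / \<mu>) * S2" using mu_pos by simp
    finally show ?thesis using A unfolding S2_def by linarith
  qed

  define D where "D i \<omega> = (if t = 0 then 0 else
      2 * \<gamma>\<^sup>2 * real E * (\<Sum>n<C. (q i n + P n) * (\<Sum>j<E. (norm (g n (t - 1) j \<omega>))\<^sup>2)))" for i \<omega>
  have Dpt: "(norm (wbar t 0 \<omega> - wtil i t 0 \<omega>))\<^sup>2 \<le> D i \<omega>" if iC: "i < C" and om: "\<omega> \<in> space M" for i \<omega>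
  proof (cases t)
    case 0
    have 1: "wbar t 0 \<omega> = w0"
      using om by (simp add: 0 wbar_eq w_init scaleR_sum_left[symmetric] Psum)
    have 2: "wtil i t 0 \<omega> = w0"
      using om iC by (simp add: 0 wtil_eq w_init u_init algebra_simps)
    show ?thesis using 1 2 by (simp add: D_def 0)
  next
    case (Suc s)
    define z where "z = (if s = 0 then w0 else wbar (s - 1) E \<omega>)"
    have wz: "w n s 0 \<omega> = z" if "n < C" for n
      using that om by (cases s) (simp_all add: z_def w_init w_round)
    define Gs where "Gs n = (\<Sum>j<E. g n s j \<omega>)" for n
    have wk: "w n s k \<omega> = z - \<gamma> *\<^sub>R (\<Sum>j<k. g n s j \<omega>)" if nC: "n < C" and kE: "k \<le> E" for n k
      using kE
    proof (induction k)
      case 0 thus ?case using wz[OF nC] by simp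
    next
      case (Suc k)
      hence kE': "k < E" by simp
      have "w n s (Suc k) \<omega> = w n s k \<omega> - \<gamma> *\<^sub>R g n s k \<omega>" by (rule w_step[OF nC kE' om])
      also have "w n s k \<omega> = z - \<gamma> *\<^sub>R (\<Sum>j<k. g n s j \<omega>)" using Suc.IH kE' by simp
      finally show ?case by (simp add: algebra_simps)
    qed
    have wE: "w n s E \<omega> = z - \<gamma> *\<^sub>R Gs n" if "n < C" for n
      using wk[OF that order_refl] by (simp add: Gs_def)
    have wbarE: "wbar s E \<omega> - z = - \<gamma> *\<^sub>R (\<Sum>n<C. P n *\<^sub>R Gs n)"
    proof -
      have "wbar s E \<omega> - z = (\<Sum>n<C. P n *\<^sub>R (w n s E \<omega> - z))"
        by (simp add: wbar_eq affine_sum[OF Psum])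
      also have "\<dots> = (\<Sum>n<C. P n *\<^sub>R (- \<gamma> *\<^sub>R Gs n))"
        by (intro sum.cong refl) (simp add: wE)
      also have "\<dots> = - \<gamma> *\<^sub>R (\<Sum>n<C. P n *\<^sub>R Gs n)"
        by (simp add: scaleR_sum_right mult.commute)
      finally show ?thesis .
    qed
    have uE: "u i t \<omega> - z = - \<gamma> *\<^sub>R (\<Sum>n<C. q i n *\<^sub>R Gs n)"
    proof -
      have "u i t \<omega> = (\<Sum>n<C. q i n *\<^sub>R w n s E \<omega>)"
        using u_next[OF iC om, of s] by (simp add: Suc scaleR_sum_right q_def P_def)
      hence "u i t \<omega> - z = (\<Sum>n<C. q i n *\<^sub>R (w n s E \<omega> - z))"
        by (simp add: affine_sum[OF qsum[OF iC]])
      also have "\<dots> = (\<Sum>n<C. q i n *\<^sub>R (- \<gamma> *\<^sub>R Gs n))"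
        by (intro sum.cong refl) (simp add: wE)
      also have "\<dots> = - \<gamma> *\<^sub>R (\<Sum>n<C. q i n *\<^sub>R Gs n)"
        by (simp add: scaleR_sum_right mult.commute)
      finally show ?thesis .
    qed
    have wb1: "wbar t 0 \<omega> = wbar s E \<omega>"
    proof -
      have "wbar t 0 \<omega> = (\<Sum>n<C. P n *\<^sub>R w n (Suc s) 0 \<omega>)" by (simp add: wbar_eq Suc)
      also have "\<dots> = (\<Sum>n<C. P n *\<^sub>R wbar s E \<omega>)"
        by (intro sum.cong refl) (simp add: w_round om)
      also have "\<dots> = wbar s E \<omega>" by (simp add: scaleR_sum_left[symmetric] Psum)
      finally show ?thesis .
    qed
    have wt1: "wtil i t 0 \<omega> = \<beta> *\<^sub>R wbar s E \<omega> + (1 - \<beta>) *\<^sub>R u i t \<omega>"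
      using w_round[OF iC om, of s] by (simp add: wtil_eq Suc)
    define A where "A = (\<Sum>n<C. q i n *\<^sub>R Gs n)"
    define B where "B = (\<Sum>n<C. P n *\<^sub>R Gs n)"
    have diff: "wbar t 0 \<omega> - wtil i t 0 \<omega> = ((1 - \<beta>) * \<gamma>) *\<^sub>R (A - B)"
    proof -
      have "wbar t 0 \<omega> - wtil i t 0 \<omega> = (1 - \<beta>) *\<^sub>R ((wbar s E \<omega> - z) - (u i t \<omega> - z))"
        unfolding wb1 wt1 by (simp add: algebra_simps)
      also have "\<dots> = ((1 - \<beta>) * \<gamma>) *\<^sub>R (A - B)"
        unfolding wbarE uE A_def B_def by (simp add: algebra_simps)
      finally show ?thesis .
    qed
    have nd: "norm (wbar t 0 \<omega> - wtil i t 0 \<omega>) \<le> \<gamma> * norm A + \<gamma> * norm B"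
    proof -
      have "norm (wbar t 0 \<omega> - wtil i t 0 \<omega>) = (1 - \<beta>) * \<gamma> * norm (A - B)"
        using beta gam0 unfolding diff by simp
      also have "\<dots> \<le> 1 * \<gamma> * norm (A - B)"
        using beta gam0 by (intro mult_right_mono) auto
      also have "\<dots> \<le> \<gamma> * (norm A + norm B)"
        using gam0 norm_triangle_ineq4[of A B] by (simp add: mult_left_mono)
      finally show ?thesis by (simp add: algebra_simps)
    qed
    have sq1: "(norm (wbar t 0 \<omega> - wtil i t 0 \<omega>))\<^sup>2 \<le> 2 * (\<gamma> * norm A)\<^sup>2 + 2 * (\<gamma> * norm B)\<^sup>2"
      by (rule sq_tri[OF nd]) simp
    have nA: "(norm A)\<^sup>2 \<le> (\<Sum>n<C. q i n * (norm (Gs n))\<^sup>2)"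
      using norm_sum_sq[of "{..<C}" "q i" Gs] q0[OF iC] qsum[OF iC] by (simp add: A_def)
    have nB: "(norm B)\<^sup>2 \<le> (\<Sum>n<C. P n * (norm (Gs n))\<^sup>2)"
      using norm_sum_sq[of "{..<C}" P Gs] P0' Psum by (simp add: B_def)
    have nG: "(norm (Gs n))\<^sup>2 \<le> real E * (\<Sum>j<E. (norm (g n s j \<omega>))\<^sup>2)" for n
      using norm_sum_sq1[of "\<lambda>j. g n s j \<omega>" "{..<E}"] by (simp add: Gs_def)
    have "(norm (wbar t 0 \<omega> - wtil i t 0 \<omega>))\<^sup>2 \<le> 2 * \<gamma>\<^sup>2 * ((norm A)\<^sup>2 + (norm B)\<^sup>2)"
      using sq1 by (simp add: power_mult_distrib algebra_simps)
    also have "\<dots> \<le> 2 * \<gamma>\<^sup>2 * ((\<Sum>n<C. q i n * (norm (Gs n))\<^sup>2) + (\<Sum>n<C. P n * (norm (Gs n))\<^sup>2))"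
      using nA nB by (intro mult_left_mono) auto
    also have "(\<Sum>n<C. q i n * (norm (Gs n))\<^sup>2) + (\<Sum>n<C. P n * (norm (Gs n))\<^sup>2)
        \<le> (\<Sum>n<C. (q i n + P n) * (real E * (\<Sum>j<E. (norm (g n s j \<omega>))\<^sup>2)))"
    proof -
      have "(\<Sum>n<C. q i n * (norm (Gs n))\<^sup>2) + (\<Sum>n<C. P n * (norm (Gs n))\<^sup>2)
        = (\<Sum>n<C. (q i n + P n) * (norm (Gs n))\<^sup>2)"
        by (simp add: sum.distrib distrib_right)
      also have "\<dots> \<le> (\<Sum>n<C. (q i n + P n) * (real E * (\<Sum>j<E. (norm (g n s j \<omega>))\<^sup>2)))"
      proof (rule sum_mono)
        fix n assume "n \<in> {..<C}"
        hence "q i n + P n \<ge> 0" using q0[OF iC] P0' by (simp add: add_nonneg_nonneg)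
        thus "(q i n + P n) * (norm (Gs n))\<^sup>2 \<le> (q i n + P n) * (real E * (\<Sum>j<E. (norm (g n s j \<omega>))\<^sup>2))"
          using nG by (intro mult_left_mono) auto
      qed
      finally show ?thesis .
    qed
    hence "2 * \<gamma>\<^sup>2 * ((\<Sum>n<C. q i n * (norm (Gs n))\<^sup>2) + (\<Sum>n<C. P n * (norm (Gs n))\<^sup>2))
       \<le> 2 * \<gamma>\<^sup>2 * (\<Sum>n<C. (q i n + P n) * (real E * (\<Sum>j<E. (norm (g n s j \<omega>))\<^sup>2)))"
      by (intro mult_left_mono) auto
    also have "2 * \<gamma>\<^sup>2 * (\<Sum>n<C. (q i n + P n) * (real E * (\<Sum>j<E. (norm (g n s j \<omega>))\<^sup>2))) = D i \<omega>"
      by (simp add: D_def Suc sum_distrib_left mult_ac)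
    finally show ?thesis by simp
  qed
  have Dint: "integrable M (D i) \<and> (\<integral>\<omega>. D i \<omega> \<partial>M) \<le> G\<^sup>2 / L\<^sup>2" if iC: "i < C" for i
  proof (cases t)
    case 0
    have "D i = (\<lambda>\<omega>. 0)" by (simp add: D_def 0 fun_eq_iff)
    thus ?thesis using L_pos by simp
  next
    case (Suc s)
    have Deq: "D i = (\<lambda>\<omega>. 2 * \<gamma>\<^sup>2 * real E * (\<Sum>n<C. (q i n + P n) * (\<Sum>j<E. (norm (g n s j \<omega>))\<^sup>2)))"
      by (simp add: D_def Suc fun_eq_iff)
    have int1: "integrable M (\<lambda>\<omega>. (q i n + P n) * (\<Sum>j<E. (norm (g n s j \<omega>))\<^sup>2))" if "n < C" for n
      using that norm_int by (intro integrable_mult_right Bochner_Integration.integrable_sum) auto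
    have int2: "integrable M (\<lambda>\<omega>. \<Sum>n<C. (q i n + P n) * (\<Sum>j<E. (norm (g n s j \<omega>))\<^sup>2))"
      using int1 by (intro Bochner_Integration.integrable_sum) auto
    have intD: "integrable M (D i)" unfolding Deq using int2 by (intro integrable_mult_right)
    have I1: "(\<integral>\<omega>. (q i n + P n) * (\<Sum>j<E. (norm (g n s j \<omega>))\<^sup>2) \<partial>M) \<le> (q i n + P n) * (real E * G\<^sup>2)"
      if nC: "n < C" for n
    proof -
      have "(\<integral>\<omega>. (\<Sum>j<E. (norm (g n s j \<omega>))\<^sup>2) \<partial>M) = (\<Sum>j<E. \<integral>\<omega>. (norm (g n s j \<omega>))\<^sup>2 \<partial>M)"
        using nC norm_int by (intro Bochner_Integration.integral_sum) auto
      also have "\<dots> \<le> (\<Sum>j<E. G\<^sup>2)"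
        using nC norm_bound by (intro sum_mono) auto
      also have "\<dots> = real E * G\<^sup>2" by simp
      finally have "(\<integral>\<omega>. (\<Sum>j<E. (norm (g n s j \<omega>))\<^sup>2) \<partial>M) \<le> real E * G\<^sup>2" .
      moreover have "q i n + P n \<ge> 0" using q0[OF iC nC] P0'[OF nC] by simp
      ultimately show ?thesis by (simp add: mult_left_mono)
    qed
    have "(\<integral>\<omega>. D i \<omega> \<partial>M) = 2 * \<gamma>\<^sup>2 * real E * (\<Sum>n<C. \<integral>\<omega>. (q i n + P n) * (\<Sum>j<E. (norm (g n s j \<omega>))\<^sup>2) \<partial>M)"
      unfolding Deq using int1 by (simp add: Bochner_Integration.integral_sum)
    also have "\<dots> \<le> 2 * \<gamma>\<^sup>2 * real E * (\<Sum>n<C. (q i n + P n) * (real E * G\<^sup>2))"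
      using I1 gam0 by (intro mult_left_mono sum_mono) auto
    also have "(\<Sum>n<C. (q i n + P n) * (real E * G\<^sup>2)) = 2 * (real E * G\<^sup>2)"
      using qsum[OF iC] Psum by (simp add: sum_distrib_right[symmetric] sum.distrib)
    also have "2 * \<gamma>\<^sup>2 * real E * (2 * (real E * G\<^sup>2)) = 4 * (\<gamma>\<^sup>2 * (real E)\<^sup>2) * G\<^sup>2"
      by (simp add: power2_eq_square)
    also have "\<dots> = G\<^sup>2 / L\<^sup>2" using L_pos by (simp add: gamE)
    finally show ?thesis using intD by simp
  qed

  define H where "H \<omega> = (1 / \<mu>) * (\<Sum>i<C. P i * ((norm (gF i (wtil i t 0 \<omega>)))\<^sup>2 + L\<^sup>2 * D i \<omega>))" for \<omega>
  have Hpt: "Fglob p C Fs (wbar t 0 \<omega>) - Fglob p C Fs wstar \<le> H \<omega>" if om: "\<omega> \<in> space M" for \<omega>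
  proof -
    have "(\<Sum>i<C. P i * ((norm (gF i (wtil i t 0 \<omega>)))\<^sup>2 + L\<^sup>2 * (norm (wbar t 0 \<omega> - wtil i t 0 \<omega>))\<^sup>2))
        \<le> (\<Sum>i<C. P i * ((norm (gF i (wtil i t 0 \<omega>)))\<^sup>2 + L\<^sup>2 * D i \<omega>))"
    proof (rule sum_mono)
      fix i assume "i \<in> {..<C}"
      hence iC: "i < C" by simp
      show "P i * ((norm (gF i (wtil i t 0 \<omega>)))\<^sup>2 + L\<^sup>2 * (norm (wbar t 0 \<omega> - wtil i t 0 \<omega>))\<^sup>2)
          \<le> P i * ((norm (gF i (wtil i t 0 \<omega>)))\<^sup>2 + L\<^sup>2 * D i \<omega>)"
        using Dpt[OF iC om] P0'[OF iC] by (intro mult_left_mono add_left_mono) auto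
    qed
    hence "(1 / \<mu>) * (\<Sum>i<C. P i * ((norm (gF i (wtil i t 0 \<omega>)))\<^sup>2 + L\<^sup>2 * (norm (wbar t 0 \<omega> - wtil i t 0 \<omega>))\<^sup>2))
        \<le> H \<omega>" unfolding H_def using mu_pos by (intro mult_left_mono) auto
    thus ?thesis using PLpt[of "wbar t 0 \<omega>" "\<lambda>i. wtil i t 0 \<omega>"] by linarith
  qed
  have intH: "integrable M H"
  proof -
    have "integrable M (\<lambda>\<omega>. (1 / \<mu>) * (\<Sum>i<C. P i * ((norm (gF i (wtil i t 0 \<omega>)))\<^sup>2 + L\<^sup>2 * D i \<omega>)))"
      using key Dint by (intro integrable_mult_right Bochner_Integration.integrable_sum Bochner_Integration.integrable_add) auto
    thus ?thesis by (simp add: H_def[abs_def])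
  qed
  have intHb: "(\<integral>\<omega>. H \<omega> \<partial>M) \<le> 2 * G\<^sup>2 / \<mu>"
  proof -
    have "(\<integral>\<omega>. H \<omega> \<partial>M) = (1 / \<mu>) * (\<Sum>i<C. P i * ((\<integral>\<omega>. (norm (gF i (wtil i t 0 \<omega>)))\<^sup>2 \<partial>M) + L\<^sup>2 * (\<integral>\<omega>. D i \<omega> \<partial>M)))"
      unfolding H_def using key Dint
      by (simp add: Bochner_Integration.integral_sum Bochner_Integration.integrable_add Bochner_Integration.integral_add)
    also have "\<dots> \<le> (1 / \<mu>) * (\<Sum>i<C. P i * (G\<^sup>2 + L\<^sup>2 * (G\<^sup>2 / L\<^sup>2)))"
    proof -
      have "(\<Sum>i<C. P i * ((\<integral>\<omega>. (norm (gF i (wtil i t 0 \<omega>)))\<^sup>2 \<partial>M) + L\<^sup>2 * (\<integral>\<omega>. D i \<omega> \<partial>M)))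
          \<le> (\<Sum>i<C. P i * (G\<^sup>2 + L\<^sup>2 * (G\<^sup>2 / L\<^sup>2)))"
      proof (rule sum_mono)
        fix i assume "i \<in> {..<C}"
        hence iC: "i < C" by simp
        have "L\<^sup>2 * (\<integral>\<omega>. D i \<omega> \<partial>M) \<le> L\<^sup>2 * (G\<^sup>2 / L\<^sup>2)"
          using Dint[OF iC] by (intro mult_left_mono) auto
        thus "P i * ((\<integral>\<omega>. (norm (gF i (wtil i t 0 \<omega>)))\<^sup>2 \<partial>M) + L\<^sup>2 * (\<integral>\<omega>. D i \<omega> \<partial>M))
            \<le> P i * (G\<^sup>2 + L\<^sup>2 * (G\<^sup>2 / L\<^sup>2))"
          using key[OF iC, of t] P0'[OF iC] by (intro mult_left_mono) auto
      qed
      thus ?thesis using mu_pos by (intro mult_left_mono) auto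
    qed
    also have "\<dots> = 2 * G\<^sup>2 / \<mu>"
      using L_pos Psum by (simp add: sum_distrib_right[symmetric])
    finally show ?thesis .
  qed
  have wbarM: "wbar t 0 \<in> borel_measurable M"
  proof -
    have "(\<lambda>\<omega>. \<Sum>i<C. P i *\<^sub>R w i t 0 \<omega>) \<in> borel_measurable M"
    proof (rule borel_measurable_sum)
      fix i assume "i \<in> {..<C}"
      hence [measurable]: "w i t 0 \<in> borel_measurable M" using toMv[OF w0meas] by simp
      show "(\<lambda>\<omega>. P i *\<^sub>R w i t 0 \<omega>) \<in> borel_measurable M" by measurable
    qed
    moreover have "wbar t 0 = (\<lambda>\<omega>. \<Sum>i<C. P i *\<^sub>R w i t 0 \<omega>)" by (simp add: fun_eq_iff wbar_eq)
    ultimately show ?thesis by simp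
  qed
  have FsB: "Fs i \<in> borel_measurable borel" if iC: "i < C" for i
  proof (rule borel_measurable_continuous_onI)
    have "\<forall>x\<in>UNIV. isCont (Fs i) x"
      using grad[OF iC] unfolding gderiv_def by (blast intro: has_derivative_continuous)
    thus "continuous_on UNIV (Fs i)" by (rule continuous_at_imp_continuous_on)
  qed
  have FM: "(\<lambda>\<omega>. Fglob p C Fs (wbar t 0 \<omega>)) \<in> borel_measurable M"
  proof -
    have "(\<lambda>\<omega>. \<Sum>i<C. P i * Fs i (wbar t 0 \<omega>)) \<in> borel_measurable M"
    proof (rule borel_measurable_sum)
      fix i assume "i \<in> {..<C}"
      hence [measurable]: "Fs i \<in> borel_measurable borel" using FsB by simp
      note wbarM[measurable]
      show "(\<lambda>\<omega>. P i * Fs i (wbar t 0 \<omega>)) \<in> borel_measurable M" by measurable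
    qed
    thus ?thesis by (simp add: Fg)
  qed
  have lower: "Fglob p C Fs wstar \<le> Fglob p C Fs (wbar t 0 \<omega>)" for \<omega> by (rule wstar_min)
  have intF: "integrable M (\<lambda>\<omega>. Fglob p C Fs (wbar t 0 \<omega>))"
  proof (rule Bochner_Integration.integrable_bound[where f="\<lambda>\<omega>. \<bar>Fglob p C Fs wstar\<bar> + H \<omega>"])
    show "integrable M (\<lambda>\<omega>. \<bar>Fglob p C Fs wstar\<bar> + H \<omega>)"
      using intH by (intro Bochner_Integration.integrable_add) auto
    show "(\<lambda>\<omega>. Fglob p C Fs (wbar t 0 \<omega>)) \<in> borel_measurable M" by (rule FM)
    show "AE \<omega> in M. norm (Fglob p C Fs (wbar t 0 \<omega>)) \<le> norm (\<bar>Fglob p C Fs wstar\<bar> + H \<omega>)"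
    proof (rule AE_I2)
      fix \<omega> assume om: "\<omega> \<in> space M"
      have h1: "Fglob p C Fs (wbar t 0 \<omega>) - Fglob p C Fs wstar \<le> H \<omega>" by (rule Hpt[OF om])
      have h2: "Fglob p C Fs wstar \<le> Fglob p C Fs (wbar t 0 \<omega>)" by (rule lower)
      have "\<bar>Fglob p C Fs (wbar t 0 \<omega>)\<bar> \<le> \<bar>Fglob p C Fs wstar\<bar> + H \<omega>"
        using h1 h2 by (simp add: abs_le_iff) (use abs_ge_self[of "Fglob p C Fs wstar"] abs_ge_minus_self[of "Fglob p C Fs wstar"] in linarith)
      moreover have "\<bar>Fglob p C Fs wstar\<bar> + H \<omega> \<le> \<bar>\<bar>Fglob p C Fs wstar\<bar> + H \<omega>\<bar>" by (rule abs_ge_self)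
      ultimately show "norm (Fglob p C Fs (wbar t 0 \<omega>)) \<le> norm (\<bar>Fglob p C Fs wstar\<bar> + H \<omega>)"
        by simp
    qed
  qed
  have mainb: "(\<integral>\<omega>. Fglob p C Fs (wbar t 0 \<omega>) \<partial>M) - Fglob p C Fs wstar \<le> 2 * G\<^sup>2 / \<mu>"
  proof -
    have "(\<integral>\<omega>. Fglob p C Fs (wbar t 0 \<omega>) - Fglob p C Fs wstar \<partial>M)
        = (\<integral>\<omega>. Fglob p C Fs (wbar t 0 \<omega>) \<partial>M) - Fglob p C Fs wstar"
      using intF PS.prob_space by (simp add: Bochner_Integration.integral_diff)
    moreover have "(\<integral>\<omega>. Fglob p C Fs (wbar t 0 \<omega>) - Fglob p C Fs wstar \<partial>M) \<le> (\<integral>\<omega>. H \<omega> \<partial>M)"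
      using intF intH Hpt by (intro integral_mono Bochner_Integration.integrable_diff) auto
    ultimately show ?thesis using intHb by linarith
  qed

  \<comment> \<open>comparison with the right-hand side\<close>
  have muL: "\<mu> \<le> L"
  proof -
    obtain b :: 'v where b: "b \<in> Basis" using nonempty_Basis by blast
    have nb: "norm b = 1" using b by simp
    have s1: "Fs 0 b \<ge> Fs 0 0 + inner (gF 0 0) (b - 0) + \<mu> / 2 * (norm (b - 0))\<^sup>2"
      using sconv[OF C0] unfolding strongly_convex_grad_def by blast
    have s2: "Fs 0 0 \<ge> Fs 0 b + inner (gF 0 b) (0 - b) + \<mu> / 2 * (norm (0 - b))\<^sup>2"
      using sconv[OF C0] unfolding strongly_convex_grad_def by blast
    have "\<mu> \<le> inner (gF 0 b) b - inner (gF 0 0) b" using s1 s2 nb by simp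
    also have "\<dots> = inner (gF 0 b - gF 0 0) b" by (simp add: inner_diff_left)
    also have "\<dots> \<le> norm (gF 0 b - gF 0 0) * norm b" by (rule norm_cauchy_schwarz)
    also have "\<dots> \<le> L * norm (b - 0)"
      using lipschitz_onD[OF smooth[OF C0], of b 0] nb by (simp add: dist_norm)
    finally show ?thesis using nb by simp
  qed
  have T1: "0 \<le> L * (Fglob p C Fs w0 - Fglob p C Fs wstar) / \<mu> * (1 - \<mu> / ((\<beta> + 2) * L)) ^ t"
  proof -
    have pos: "(\<beta> + 2) * L > 0" using beta L_pos by simp
    have "0 \<le> \<beta> * L" using beta L_pos by simp
    hence "\<mu> \<le> (\<beta> + 2) * L" unfolding distrib_right using muL L_pos by linarith
    hence "\<mu> / ((\<beta> + 2) * L) \<le> 1" using pos by (simp add: pos_divide_le_eq)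
    hence "0 \<le> (1 - \<mu> / ((\<beta> + 2) * L)) ^ t" by simp
    moreover have "0 \<le> L * (Fglob p C Fs w0 - Fglob p C Fs wstar) / \<mu>"
      using wstar_min[of w0] L_pos mu_pos by simp
    ultimately show ?thesis by (rule mult_nonneg_nonneg[rotated])
  qed
  have T2: "0 \<le> (\<Sum>i<C. (P i)\<^sup>2) * \<sigma>\<^sup>2 / (4 * \<mu>)"
    using mu_pos by (simp add: sum_nonneg)
  have T3: "0 \<le> 3 * L * (Fglob p C Fs wstar - (\<Sum>i<C. P i * Fs i (ws i))) / (2 * \<mu>)"
  proof -
    have "(\<Sum>i<C. P i * Fs i (ws i)) \<le> Fglob p C Fs wstar"
      unfolding Fg using ws_min P0' by (intro sum_mono mult_left_mono) auto
    thus ?thesis using L_pos mu_pos by simp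
  qed
  have T4: "2 * G\<^sup>2 / \<mu> \<le> 2 * (4 + (1 - \<beta>)\<^sup>2 + 8 * (1 - 1 / \<beta>)\<^sup>2) * (real E)\<^sup>2 * G\<^sup>2 / \<mu>"
  proof -
    have "1 \<le> (real E)\<^sup>2" using E1 by simp
    moreover have "4 \<le> 4 + (1 - \<beta>)\<^sup>2 + 8 * (1 - 1 / \<beta>)\<^sup>2" by simp
    ultimately have "1 \<le> (4 + (1 - \<beta>)\<^sup>2 + 8 * (1 - 1 / \<beta>)\<^sup>2) * (real E)\<^sup>2"
      by (metis le_numeral_extra(4) mult_mono' one_le_numeral order_trans mult_1 zero_le_one dual_order.trans) 
    hence "2 * G\<^sup>2 * 1 \<le> 2 * G\<^sup>2 * ((4 + (1 - \<beta>)\<^sup>2 + 8 * (1 - 1 / \<beta>)\<^sup>2) * (real E)\<^sup>2)"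
      by (intro mult_left_mono) auto
    hence "2 * G\<^sup>2 \<le> 2 * (4 + (1 - \<beta>)\<^sup>2 + 8 * (1 - 1 / \<beta>)\<^sup>2) * (real E)\<^sup>2 * G\<^sup>2"
      by (simp only: mult_1_right mult_ac)
    thus ?thesis using mu_pos by (intro divide_right_mono) auto
  qed
  have T5: "0 \<le> \<beta> * (1 - \<beta>) * real E * G\<^sup>2 / (8 * L)"
    using beta L_pos by simp
  show ?thesis
    unfolding P_def[symmetric] using intF mainb T1 T2 T3 T4 T5 by linarith
qed

end
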